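(* Let $\epsilon\ge0$, let $I,J\subseteq\mathbb{R}$ be closed bounded intervals with $|I|\le|J|$, and let $\mu$ and $\nu$ be the uniform probability measures on $I$ and $J$. Consider binary classification in which the two labels are equally likely, the label associated with $\mu$ has input distribution $\mu$ and the other label has input distribution $\nu$, classifiers are indexed by closed sets $A\subseteq\mathbb{R}$ (output the $\mu$-label on $A$ and the $\nu$-label on $A^c$), with $0$-$1$ loss and adversarial risk $\mathbb{E}_{(x,y)}\big[\sup_{|x'-x|\le\epsilon}(\text{loss at }x')\big]$. Then the optimal robust risk (infimum over closed $A$) equals $\tfrac12\nu(I^{2\epsilon})$, and the classifier with $A=I^{\epsilon}$ is an optimal robust classifier.
   Context: For $S\subseteq\mathbb{R}$ and $\delta\ge0$, $S^\delta=\{x:|x-s|\le\delta\text{ for some }s\in S\}$. *)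

theory Defs
  imports "HOL-Analysis.Analysis"
begin

definition thicken :: "real set \<Rightarrow> real \<Rightarrow> real set" where
  "thicken S \<delta> = {x. \<exists>s\<in>S. \<bar>x - s\<bar> \<le> \<delta>}"

text \<open>0-1 loss of the classifier indexed by A at input x; label True is the
  mu-label (predicted on A), label False is the nu-label (predicted on the complement).\<close>
definition loss01 :: "real set \<Rightarrow> real \<Rightarrow> bool \<Rightarrow> real" where
  "loss01 A x y = (if (x \<in> A) = y then 0 else 1)"

definition adv_risk :: "real \<Rightarrow> real measure \<Rightarrow> real measure \<Rightarrow> real set \<Rightarrow> real" where
  "adv_risk \<epsilon> \<mu> \<nu> A =
     (1/2) * (\<integral>x. (SUP x'\<in>cball x \<epsilon>. loss01 A x' True) \<partial>\<mu>)
   + (1/2) * (\<integral>x. (SUP x'\<in>cball x \<epsilon>. loss01 A x' False) \<partial>\<nu>)"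

end

theory Submission
  imports Defs
begin

lemma ml_Icc: "(l::real) \<le> u \<Longrightarrow> measure lborel {l..u} = u - l"
  by (simp add: measure_def)
lemma ml_Ico: "(l::real) \<le> u \<Longrightarrow> measure lborel {l..<u} = u - l"
  by (simp add: measure_def)
lemma ml_Ioc: "(l::real) \<le> u \<Longrightarrow> measure lborel {l<..u} = u - l"
  by (simp add: measure_def)

lemma thicken_Icc: "a \<le> b \<Longrightarrow> 0 \<le> \<delta> \<Longrightarrow> thicken {a..b} \<delta> = {a-\<delta>..b+\<delta>}"
  unfolding thicken_def
proof (intro set_eqI iffI)
  fix x assume "x \<in> {x. \<exists>s\<in>{a..b}. \<bar>x - s\<bar> \<le> \<delta>}"
  then show "x \<in> {a-\<delta>..b+\<delta>}" by auto
next
  fix x assume "a \<le> b" "0 \<le> \<delta>" "x \<in> {a-\<delta>..b+\<delta>}"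
  then show "x \<in> {x. \<exists>s\<in>{a..b}. \<bar>x - s\<bar> \<le> \<delta>}"
    by (intro CollectI bexI[of _ "max a (min b x)"]) (auto simp: abs_if)
qed

lemma closed_thicken: "closed A \<Longrightarrow> 0 \<le> \<epsilon> \<Longrightarrow> closed (thicken A \<epsilon>)"
proof -
  assume A: "closed A" "0 \<le> \<epsilon>"
  have "thicken A \<epsilon> = (\<Union>x\<in>A. \<Union>y\<in>cball 0 \<epsilon>. {x + y})"
  proof (intro set_eqI iffI)
    fix z assume "z \<in> thicken A \<epsilon>"
    then obtain s where s: "s \<in> A" "\<bar>z - s\<bar> \<le> \<epsilon>" unfolding thicken_def by blast
    then have "z - s \<in> cball 0 \<epsilon>" by (simp add: dist_real_def)
    moreover have "z = s + (z - s)" by simp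
    ultimately show "z \<in> (\<Union>x\<in>A. \<Union>y\<in>cball 0 \<epsilon>. {x + y})" using s(1) by blast
  next
    fix z assume "z \<in> (\<Union>x\<in>A. \<Union>y\<in>cball 0 \<epsilon>. {x + y})"
    then obtain s y where s: "s \<in> A" "y \<in> cball 0 \<epsilon>" "z = s + y" by blast
    then have "\<bar>z - s\<bar> \<le> \<epsilon>" by (simp add: dist_real_def)
    then show "z \<in> thicken A \<epsilon>" unfolding thicken_def using s(1) by blast
  qed
  then show ?thesis using closed_compact_sums[OF A(1) compact_cball] by simp
qed

lemma closed_erosion: "closed A \<Longrightarrow> closed {x::real. cball x \<epsilon> \<subseteq> A}"
proof -
  assume A: "closed A"
  have "{x::real. cball x \<epsilon> \<subseteq> A} = (\<Inter>t\<in>cball 0 \<epsilon>. (+) (-t) ` A)"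
  proof (intro set_eqI iffI)
    fix x assume x: "x \<in> {x::real. cball x \<epsilon> \<subseteq> A}"
    show "x \<in> (\<Inter>t\<in>cball 0 \<epsilon>. (+) (-t) ` A)"
    proof (rule INT_I)
      fix t :: real assume "t \<in> cball 0 \<epsilon>"
      then have "x + t \<in> cball x \<epsilon>" by (simp add: dist_real_def)
      then have "x + t \<in> A" using x by blast
      moreover have "x = - t + (x + t)" by simp
      ultimately show "x \<in> (+) (-t) ` A" by (rule rev_image_eqI)
    qed
  next
    fix x assume x: "x \<in> (\<Inter>t\<in>cball 0 \<epsilon>. (+) (-t) ` A)"
    show "x \<in> {x::real. cball x \<epsilon> \<subseteq> A}"
    proof (intro CollectI subsetI)
      fix y assume "y \<in> cball x \<epsilon>"
      then have "y - x \<in> cball 0 \<epsilon>" by (simp add: dist_real_def abs_minus_commute)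
      then have "x \<in> (+) (-(y - x)) ` A" using x by blast
      then obtain z where "z \<in> A" "x = -(y - x) + z" by blast
      then show "y \<in> A" by simp
    qed
  qed
  moreover have "closed (\<Inter>t\<in>cball 0 \<epsilon>. (+) (-t) ` A)"
    by (rule closed_INT) (blast intro: closed_translation[OF A])
  ultimately show ?thesis by simp
qed

lemma sup1: "0 \<le> \<epsilon> \<Longrightarrow> (SUP x'\<in>cball x \<epsilon>. loss01 A x' True) = indicator (- {x. cball x \<epsilon> \<subseteq> A}) x"
proof (cases "cball x \<epsilon> \<subseteq> A")
  case True
  assume "0 \<le> \<epsilon>"
  then have "x \<in> cball x \<epsilon>" by simp
  then show ?thesis using True
    by (intro cSup_eq_maximum) (auto simp: loss01_def subset_iff intro!: image_eqI[of _ _ x])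
next
  case False
  from False obtain y where y: "y \<in> cball x \<epsilon>" "y \<notin> A" by blast
  then show ?thesis using False
    by (intro cSup_eq_maximum) (auto simp: loss01_def intro!: image_eqI[of _ _ y])
qed

lemma sup2: "0 \<le> \<epsilon> \<Longrightarrow> (SUP x'\<in>cball x \<epsilon>. loss01 A x' False) = indicator (thicken A \<epsilon>) x"
proof (cases "x \<in> thicken A \<epsilon>")
  case True
  then obtain y where y: "y \<in> A" "\<bar>x - y\<bar> \<le> \<epsilon>" by (auto simp: thicken_def)
  then show ?thesis using True
    by (intro cSup_eq_maximum) (auto simp: loss01_def dist_real_def intro!: image_eqI[of _ _ y])
next
  case False
  assume "0 \<le> \<epsilon>"
  then have "x \<in> cball x \<epsilon>" by simp
  then show ?thesis using False
    by (intro cSup_eq_maximum) (auto simp: loss01_def thicken_def dist_real_def abs_minus_commute intro!: image_eqI[of _ _ x])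
qed

lemma meas_unif: "(a::real) < b \<Longrightarrow> S \<in> sets borel \<Longrightarrow>
   measure (uniform_measure lborel {a..b}) S = measure lborel ({a..b} \<inter> S) / (b - a)"
  by (subst measure_uniform_measure) (auto simp: ml_Icc)

lemma risk_eq:
  assumes "0 \<le> \<epsilon>" "closed A" "(a::real) < b" "c < d"
  shows "adv_risk \<epsilon> (uniform_measure lborel {a..b}) (uniform_measure lborel {c..d}) A =
    1/2 * (measure lborel ({a..b} \<inter> - {x. cball x \<epsilon> \<subseteq> A}) / (b - a))
  + 1/2 * (measure lborel ({c..d} \<inter> thicken A \<epsilon>) / (d - c))"
proof -
  have m1: "- {x. cball x \<epsilon> \<subseteq> A} \<in> sets borel"
    using closed_erosion[OF assms(2)] by (intro borel_open) (simp add: open_Compl)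
  have m2: "thicken A \<epsilon> \<in> sets borel"
    using closed_thicken[OF assms(2,1)] by (intro borel_closed)
  show ?thesis
    unfolding adv_risk_def sup1[OF assms(1)] sup2[OF assms(1)]
    using m1 m2 assms by (simp add: meas_unif)
qed


lemma fm_Icc[simp]: "{l..u::real} \<in> fmeasurable lborel"
  using fmeasurable_cbox[of l u] by simp

lemma fm: "S \<in> sets borel \<Longrightarrow> S \<subseteq> {l..u::real} \<Longrightarrow> S \<in> fmeasurable lborel"
  by (rule fmeasurableI2[of "cbox l u"]) auto

lemma cover_lemma:
  fixes x f1 f2 \<epsilon> :: real
  assumes eps: "0 \<le> \<epsilon>" and f1E: "cball f1 \<epsilon> \<subseteq> A" and f2E: "cball f2 \<epsilon> \<subseteq> A"
    and EA: "\<And>y. y \<in> E \<Longrightarrow> y \<in> A"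
    and lo: "f1 - 2*\<epsilon> \<le> x" and hi: "x \<le> f2 + 2*\<epsilon>"
  shows "x \<in> thicken A \<epsilon> \<or> x \<in> {f1..f2} - E"
proof (cases "x < f1")
  case True
  define s where "s = max x (f1 - \<epsilon>)"
  have "f1 - \<epsilon> \<le> s" "s \<le> f1" using True eps unfolding s_def by auto
  then have "s \<in> cball f1 \<epsilon>" by (simp add: dist_real_def abs_le_iff)
  then have "s \<in> A" using f1E by blast
  moreover have "x \<le> s" "s \<le> x + \<epsilon>" using lo eps unfolding s_def by auto
  then have "\<bar>x - s\<bar> \<le> \<epsilon>" by (simp add: abs_le_iff)
  ultimately show ?thesis unfolding thicken_def by blast
next
  case x1: False
  show ?thesis
  proof (cases "x > f2")
    case True
    define s where "s = min x (f2 + \<epsilon>)"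
    have "s \<le> f2 + \<epsilon>" "f2 \<le> s" using True eps unfolding s_def by auto
    then have "s \<in> cball f2 \<epsilon>" by (simp add: dist_real_def abs_le_iff)
    then have "s \<in> A" using f2E by blast
    moreover have "s \<le> x" "x \<le> s + \<epsilon>" using hi eps unfolding s_def by auto
    then have "\<bar>x - s\<bar> \<le> \<epsilon>" by (simp add: abs_le_iff)
    ultimately show ?thesis unfolding thicken_def by blast
  next
    case x2: False
    show ?thesis
    proof (cases "x \<in> E")
      case True
      then have "x \<in> A" by (rule EA)
      moreover have "\<bar>x - x\<bar> \<le> \<epsilon>" using eps by simp
      ultimately show ?thesis unfolding thicken_def by blast
    next
      case False then show ?thesis using x1 x2 by auto
    qed
  qed
qed

lemma key:
  assumes eps: "0 \<le> \<epsilon>" and A: "closed A" and ab: "(a::real) < b" and cd: "c < d"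
    and len: "b - a \<le> d - c"
  defines "E \<equiv> {x. cball x \<epsilon> \<subseteq> A}"
  shows "measure lborel ({c..d} \<inter> thicken {a..b} (2*\<epsilon>)) / (d - c) \<le>
    measure lborel ({a..b} \<inter> - E) / (b - a) + measure lborel ({c..d} \<inter> thicken A \<epsilon>) / (d - c)"
proof -
  have Ec: "closed E" unfolding E_def by (rule closed_erosion[OF A])
  have Eb: "E \<in> sets borel" using Ec by (rule borel_closed)
  have Tb: "thicken A \<epsilon> \<in> sets borel" using closed_thicken[OF A eps] by (rule borel_closed)
  have TI: "thicken {a..b} (2*\<epsilon>) = {a-2*\<epsilon>..b+2*\<epsilon>}" using ab eps by (intro thicken_Icc) auto
  define T where "T = measure lborel ({c..d} \<inter> thicken {a..b} (2*\<epsilon>))"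
  define S where "S = measure lborel ({c..d} \<inter> thicken A \<epsilon>)"
  define L where "L = measure lborel ({a..b} \<inter> - E)"
  have T1: "T \<le> d - c"
  proof -
    have "T \<le> measure lborel {c..d}" unfolding T_def TI
      by (rule measure_mono_fmeasurable) auto
    then show ?thesis using cd by (simp add: ml_Icc)
  qed
  have S0: "0 \<le> S" "0 \<le> L" unfolding S_def L_def by auto
  show ?thesis
  proof (cases "{a..b} \<inter> E = {}")
    case True
    then have "{a..b} \<inter> - E = {a..b}" by auto
    then have "L = b - a" unfolding L_def using ab by (simp add: ml_Icc)
    then have "L / (b - a) = 1" using ab by simp
    moreover have "T / (d - c) \<le> 1" using T1 cd by simp
    moreover have "0 \<le> S / (d - c)" using S0 cd by simp
    ultimately show ?thesis unfolding T_def[symmetric] S_def[symmetric] L_def[symmetric] by linarith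
  next
    case False
    define F where "F = {a..b} \<inter> E"
    have Fne: "F \<noteq> {}" and Fc: "closed F" and Fbb: "bdd_below F" "bdd_above F"
      using False Ec unfolding F_def by (auto intro: bdd_below_Int1 bdd_above_Int1)
    define f1 where "f1 = Inf F"
    define f2 where "f2 = Sup F"
    have f1F: "f1 \<in> F" unfolding f1_def by (rule closed_contains_Inf[OF Fne Fbb(1) Fc])
    have f2F: "f2 \<in> F" unfolding f2_def by (rule closed_contains_Sup[OF Fne Fbb(2) Fc])
    have Fsub: "F \<subseteq> {f1..f2}" unfolding f1_def f2_def
      using Fbb by (auto intro: cInf_lower cSup_upper)
    have "f1 \<in> {f1..f2}" using f1F Fsub by blast
    then have f12: "a \<le> f1" "f1 \<le> f2" "f2 \<le> b" using f1F f2F unfolding F_def by auto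
    have f1E: "cball f1 \<epsilon> \<subseteq> A" and f2E: "cball f2 \<epsilon> \<subseteq> A"
      using f1F f2F unfolding F_def E_def by auto
    define M where "M = measure lborel ({f1..f2} - E)"
    have Fb: "F \<in> sets lborel" unfolding F_def using Eb by auto
    have Fsub2: "F \<subseteq> {a..b}" unfolding F_def by auto
    have L_eq: "L = (b - a) - (f2 - f1) + M"
    proof -
      have "L = measure lborel ({a..b} - F)" unfolding L_def F_def
        by (rule arg_cong[where f="measure lborel"]) auto
      also have "\<dots> = measure lborel {a..b} - measure lborel F"
        by (rule measure_Diff) (use Fb Fsub2 ab in auto)
      finally have 1: "L = measure lborel {a..b} - measure lborel F" .
      have "M = measure lborel ({f1..f2} - F)" unfolding M_def F_def
        using f12 by (intro arg_cong[where f="measure lborel"]) auto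
      also have "\<dots> = measure lborel {f1..f2} - measure lborel F"
        by (rule measure_Diff) (use Fsub Fb f12 in auto)
      finally have 2: "M = measure lborel {f1..f2} - measure lborel F" .
      show ?thesis using 1 2 f12 ab by (simp add: ml_Icc)
    qed
    have cover: "{c..d} \<inter> thicken {a..b} (2*\<epsilon>) \<subseteq>
       (({c..d} \<inter> thicken A \<epsilon>) \<union> {a-2*\<epsilon>..<f1-2*\<epsilon>}) \<union> ({f2+2*\<epsilon><..b+2*\<epsilon>} \<union> ({f1..f2} - E))"
    proof
      fix x assume x: "x \<in> {c..d} \<inter> thicken {a..b} (2*\<epsilon>)"
      then have xI: "a - 2*\<epsilon> \<le> x" "x \<le> b + 2*\<epsilon>" "x \<in> {c..d}" unfolding TI by auto
      show "x \<in> (({c..d} \<inter> thicken A \<epsilon>) \<union> {a-2*\<epsilon>..<f1-2*\<epsilon>}) \<union> ({f2+2*\<epsilon><..b+2*\<epsilon>} \<union> ({f1..f2} - E))"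
      proof (cases "x < f1 - 2*\<epsilon> \<or> x > f2 + 2*\<epsilon>")
        case True
        then have "x \<in> {a-2*\<epsilon>..<f1-2*\<epsilon>} \<or> x \<in> {f2+2*\<epsilon><..b+2*\<epsilon>}" using xI by auto
        then show ?thesis by blast
      next
        case False
        then have lohi: "f1 - 2*\<epsilon> \<le> x" "x \<le> f2 + 2*\<epsilon>" by auto
        have EA: "y \<in> A" if "y \<in> E" for y
        proof -
          have "cball y \<epsilon> \<subseteq> A" using that by (simp add: E_def)
          moreover have "y \<in> cball y \<epsilon>" using eps by simp
          ultimately show "y \<in> A" by blast
        qed
        have "x \<in> thicken A \<epsilon> \<or> x \<in> {f1..f2} - E"
          by (rule cover_lemma[OF eps f1E f2E EA lohi])
        then show ?thesis using xI(3) by blast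
      qed
    qed
    have "T \<le> measure lborel ((({c..d} \<inter> thicken A \<epsilon>) \<union> {a-2*\<epsilon>..<f1-2*\<epsilon>}) \<union> ({f2+2*\<epsilon><..b+2*\<epsilon>} \<union> ({f1..f2} - E)))"
      unfolding T_def
    proof (rule measure_mono_fmeasurable[OF cover])
      show "{c..d} \<inter> thicken {a..b} (2 * \<epsilon>) \<in> sets lborel" unfolding TI by simp
      have s1: "({c..d} \<inter> thicken A \<epsilon>) \<in> sets borel" using Tb by simp
      have s2: "{f1..f2} - E \<in> sets borel" using Eb by simp
      have sb: "(({c..d} \<inter> thicken A \<epsilon>) \<union> {a-2*\<epsilon>..<f1-2*\<epsilon>}) \<union> ({f2+2*\<epsilon><..b+2*\<epsilon>} \<union> ({f1..f2} - E)) \<in> sets borel"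
        using s1 s2 by (intro sets.Un) auto
      define l0 where "l0 = min c (a - 2*\<epsilon>)"
      define u0 where "u0 = max d (b + 2*\<epsilon>)"
      have l0: "l0 \<le> c" "l0 \<le> a - 2*\<epsilon>" and u0: "d \<le> u0" "b + 2*\<epsilon> \<le> u0" unfolding l0_def u0_def by simp_all
      have "{c..d} \<subseteq> {l0..u0}" using l0 u0 by auto
      moreover have "{a-2*\<epsilon>..<f1-2*\<epsilon>} \<subseteq> {l0..u0}" using l0 u0 f12 eps by auto
      moreover have "{f2+2*\<epsilon><..b+2*\<epsilon>} \<subseteq> {l0..u0}" using l0 u0 f12 eps by auto
      moreover have "{f1..f2} \<subseteq> {l0..u0}" using l0 u0 f12 eps by auto
      ultimately have ss: "(({c..d} \<inter> thicken A \<epsilon>) \<union> {a-2*\<epsilon>..<f1-2*\<epsilon>}) \<union> ({f2+2*\<epsilon><..b+2*\<epsilon>} \<union> ({f1..f2} - E)) \<subseteq> {l0..u0}"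
        by blast
      show "(({c..d} \<inter> thicken A \<epsilon>) \<union> {a-2*\<epsilon>..<f1-2*\<epsilon>}) \<union> ({f2+2*\<epsilon><..b+2*\<epsilon>} \<union> ({f1..f2} - E)) \<in> fmeasurable lborel"
        by (rule fm[OF sb ss])
    qed
    also have "\<dots> \<le> measure lborel (({c..d} \<inter> thicken A \<epsilon>) \<union> {a-2*\<epsilon>..<f1-2*\<epsilon>}) + measure lborel ({f2+2*\<epsilon><..b+2*\<epsilon>} \<union> ({f1..f2} - E))"
      using Tb Eb by (intro measure_Un_le sets.Un sets.Int sets.Diff) auto
    also have "\<dots> \<le> (S + measure lborel {a-2*\<epsilon>..<f1-2*\<epsilon>}) + (measure lborel {f2+2*\<epsilon><..b+2*\<epsilon>} + M)"
      unfolding S_def M_def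
      using Tb Eb by (intro add_mono measure_Un_le sets.Int sets.Diff) auto
    also have "\<dots> = S + L" using f12 L_eq by (simp add: ml_Ico ml_Ioc)
    finally have TSL: "T \<le> S + L" .
    have "L / (d - c) \<le> L / (b - a)" using S0 ab len by (intro divide_left_mono) auto
    moreover have "T / (d - c) \<le> (S + L) / (d - c)" using TSL cd by (intro divide_right_mono) auto
    moreover have "(S + L) / (d - c) = S / (d - c) + L / (d - c)" by (rule add_divide_distrib)
    ultimately have "T / (d - c) \<le> L / (b - a) + S / (d - c)" by linarith
    then show ?thesis unfolding T_def S_def L_def .
  qed
qed


theorem theorem9:
  fixes \<epsilon> a b c d :: real
  assumes "\<epsilon> \<ge> 0" and "a < b" and "c < d" and "b - a \<le> d - c"
  defines "\<mu> \<equiv> uniform_measure lborel {a..b}"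
      and "\<nu> \<equiv> uniform_measure lborel {c..d}"
  shows "(INF A\<in>{A. closed A}. adv_risk \<epsilon> \<mu> \<nu> A) = (1/2) * measure \<nu> (thicken {a..b} (2*\<epsilon>)) \<and>
         closed (thicken {a..b} \<epsilon>) \<and>
         adv_risk \<epsilon> \<mu> \<nu> (thicken {a..b} \<epsilon>) = (INF A\<in>{A. closed A}. adv_risk \<epsilon> \<mu> \<nu> A)"
proof -
  note eps = assms(1) and ab = assms(2) and cd = assms(3) and len = assms(4)
  define A0 where "A0 = thicken {a..b} \<epsilon>"
  have A0I: "A0 = {a-\<epsilon>..b+\<epsilon>}" unfolding A0_def using ab eps by (intro thicken_Icc) auto
  have A0c: "closed A0" unfolding A0I by simp
  have TI: "thicken {a..b} (2*\<epsilon>) = {a-2*\<epsilon>..b+2*\<epsilon>}" using ab eps by (intro thicken_Icc) auto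
  have TA0: "thicken A0 \<epsilon> = {a-2*\<epsilon>..b+2*\<epsilon>}" unfolding A0I using ab eps
    by (subst thicken_Icc) auto
  have E0: "{a..b} \<inter> - {x. cball x \<epsilon> \<subseteq> A0} = {}"
  proof -
    have "cball x \<epsilon> \<subseteq> A0" if "x \<in> {a..b}" for x
    proof
      fix y assume "y \<in> cball x \<epsilon>"
      then have "\<bar>x - y\<bar> \<le> \<epsilon>" by (simp add: dist_real_def)
      then show "y \<in> A0" unfolding A0I using that by auto
    qed
    then show ?thesis by blast
  qed
  have val: "adv_risk \<epsilon> \<mu> \<nu> A0 = 1/2 * measure \<nu> (thicken {a..b} (2*\<epsilon>))"
    unfolding \<mu>_def \<nu>_def risk_eq[OF eps A0c ab cd] E0 TA0 TI
    using cd by (subst meas_unif) auto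
  have low: "adv_risk \<epsilon> \<mu> \<nu> A0 \<le> adv_risk \<epsilon> \<mu> \<nu> A" if "closed A" for A
  proof -
    have "adv_risk \<epsilon> \<mu> \<nu> A0 = 1/2 * (measure lborel ({c..d} \<inter> thicken {a..b} (2*\<epsilon>)) / (d - c))"
    proof -
      have "measure \<nu> (thicken {a..b} (2*\<epsilon>)) = measure lborel ({c..d} \<inter> thicken {a..b} (2*\<epsilon>)) / (d - c)"
        unfolding \<nu>_def TI using cd by (intro meas_unif) auto
      then show ?thesis using val by simp
    qed
    also have "\<dots> \<le> 1/2 * (measure lborel ({a..b} \<inter> - {x. cball x \<epsilon> \<subseteq> A}) / (b - a)
       + measure lborel ({c..d} \<inter> thicken A \<epsilon>) / (d - c))"
      using key[OF eps that ab cd len] by (intro mult_left_mono) simp_all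
    also have "\<dots> = adv_risk \<epsilon> \<mu> \<nu> A"
      unfolding \<mu>_def \<nu>_def risk_eq[OF eps that ab cd] by (simp add: algebra_simps)
    finally show ?thesis .
  qed
  have inf: "(INF A\<in>{A. closed A}. adv_risk \<epsilon> \<mu> \<nu> A) = adv_risk \<epsilon> \<mu> \<nu> A0"
    using A0c low by (intro cInf_eq_minimum) auto
  show ?thesis using inf val A0c unfolding A0_def by simp
qed

end
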